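(* Let $\mathcal{L}$ be a horizontal segment $EF$ of length $1$ in the plane, and let $\mathcal{T}$ be an equilateral triangle (the convex hull of a V-shaped unit worm) with side length $\frac12$ and vertices $P,Q,R$ in counterclockwise order, labelled so that, with $O_2$ its centroid, $P=O_2+\frac{\sqrt3}{6}(\cos\beta,\sin\beta)$ for some $\beta\in[\frac{\pi}{6},\frac{5\pi}{6})$. Then $$\mu(\mathcal{L},\mathcal{T})\geq \tfrac14\max\Bigl\{\sin\bigl(\beta-\tfrac{\pi}{6}\bigr),\ \sin\bigl(\beta+\tfrac{\pi}{6}\bigr)\Bigr\}.$$
   Context: $\mu(K_1,\dots,K_n)$ denotes the area of the convex hull of $K_1\cup\dots\cup K_n$. (With this labelling, $\overrightarrow{QP}$ has argument $\beta-\frac{\pi}{6}$ and $\overrightarrow{RP}$ has argument $\beta+\frac{\pi}{6}$.) *)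

theory Defs
  imports "HOL-Analysis.Analysis"
begin

definition mu :: "(real^2) set list \<Rightarrow> real" where
  "mu Ks = measure lebesgue (convex hull (\<Union> (set Ks)))"

definition polar_pt :: "real^2 \<Rightarrow> real \<Rightarrow> real \<Rightarrow> real^2" where
  "polar_pt c r t = c + vector [r * cos t, r * sin t]"

end

theory Submission
  imports Defs
begin

lemma half_le:
  fixes E F X :: "real^2" and e :: real
  assumes "E$2 \<ge> e" "F$2 \<ge> e" "X$2 \<ge> e"
  shows "convex hull {E,F,X} \<subseteq> {x. x$2 \<ge> e}"
proof (rule hull_minimal)
  show "convex {x::real^2. x$2 \<ge> e}"
    using convex_halfspace_ge[where a="axis 2 (1::real)::real^2" and b=e] by (simp add: cart_eq_inner_axis inner_commute)
qed (use assms in auto)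

lemma half_ge:
  fixes E F X :: "real^2" and e :: real
  assumes "E$2 \<le> e" "F$2 \<le> e" "X$2 \<le> e"
  shows "convex hull {E,F,X} \<subseteq> {x. x$2 \<le> e}"
proof (rule hull_minimal)
  show "convex {x::real^2. x$2 \<le> e}"
    using convex_halfspace_le[where a="axis 2 (1::real)::real^2" and b=e] by (simp add: cart_eq_inner_axis inner_commute)
qed (use assms in auto)

lemma tri_area:
  fixes E F X :: "real^2"
  assumes "F$2=E$2" "\<bar>F$1-E$1\<bar>=1"
  shows "measure lebesgue (convex hull {E,F,X}) = \<bar>X$2 - E$2\<bar>/2"
proof -
  have "measure lebesgue (convex hull {E,F,X}) = measure lborel (convex hull {E,F,X})"
    by (simp add: measure_completion compact_imp_closed finite_imp_compact_convex_hull)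
  also have "\<dots> = \<bar>(X$1-E$1)*(F$2-E$2) - (F$1-E$1)*(X$2-E$2)\<bar>/2"
    by (rule content_triangle)
  also have "\<dots> = \<bar>X$2 - E$2\<bar>/2" using assms by (simp add: abs_mult)
  finally show ?thesis .
qed

lemma key:
  fixes E F X Y :: "real^2" and S
  assumes h: "F$2=E$2" "\<bar>F$1-E$1\<bar>=1" and mem: "E\<in>S" "F\<in>S" "X\<in>S" "Y\<in>S"
    and cS: "convex S" and mS: "S \<in> lmeasurable"
  shows "measure lebesgue S \<ge> \<bar>X$2-Y$2\<bar>/2"
proof -
  define e where "e = E$2"
  define A where "A = convex hull {E,F,X}"
  define B where "B = convex hull {E,F,Y}"
  have AS: "A \<subseteq> S" unfolding A_def using mem cS by (simp add: hull_minimal)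
  have BS: "B \<subseteq> S" unfolding B_def using mem cS by (simp add: hull_minimal)
  have mA: "A \<in> lmeasurable" unfolding A_def
    by (simp add: lmeasurable_compact finite_imp_compact_convex_hull)
  have mB: "B \<in> lmeasurable" unfolding B_def
    by (simp add: lmeasurable_compact finite_imp_compact_convex_hull)
  have aA: "measure lebesgue A = \<bar>X$2 - e\<bar>/2" unfolding A_def e_def by (rule tri_area[OF h])
  have aB: "measure lebesgue B = \<bar>Y$2 - e\<bar>/2" unfolding B_def e_def by (rule tri_area[OF h])
  have monoA: "measure lebesgue A \<le> measure lebesgue S"
    by (rule measure_mono_fmeasurable[OF AS]) (use mA mS in auto)
  have monoB: "measure lebesgue B \<le> measure lebesgue S"
    by (rule measure_mono_fmeasurable[OF BS]) (use mB mS in auto)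
  show ?thesis
  proof (cases "(X$2 - e) * (Y$2 - e) \<ge> 0")
    case True
    then have "\<bar>X$2-Y$2\<bar> \<le> max \<bar>X$2 - e\<bar> \<bar>Y$2 - e\<bar>"
      by (cases "X$2 \<ge> e"; cases "Y$2 \<ge> e") (auto simp: zero_le_mult_iff)
    then show ?thesis using aA aB monoA monoB by (simp add: max_def split: if_splits)
  next
    case False
    have sub: "A \<inter> B \<subseteq> {x. x$2 = e}"
    proof (cases "X$2 \<ge> e")
      case True
      then have "Y$2 \<le> e" using False by (auto simp: zero_le_mult_iff)
      then show ?thesis using half_le[of e E F X] half_ge[of E e F Y] True h
        unfolding A_def B_def e_def by fastforce
    next
      case c: False
      then have "Y$2 \<ge> e" using False by (auto simp: zero_le_mult_iff)
      then show ?thesis using half_ge[of E e F X] half_le[of e E F Y] c h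
        unfolding A_def B_def e_def by fastforce
    qed
    have neg: "negligible {x::real^2. x$2 = e}"
      using negligible_standard_hyperplane[where k="axis 2 (1::real)::real^2" and c=e]
      by (simp add: cart_eq_inner_axis inner_commute)
    have "negligible (A \<inter> B)" by (rule negligible_subset[OF neg sub])
    then have "measure lebesgue (A \<inter> B) = 0" by (simp add: negligible_imp_measure0)
    then have "measure lebesgue (A \<union> B) = measure lebesgue A + measure lebesgue B"
      using measure_Un3[OF mA mB] by simp
    moreover have "measure lebesgue (A \<union> B) \<le> measure lebesgue S"
      by (rule measure_mono_fmeasurable) (use AS BS mA mB mS in auto)
    moreover have "\<bar>X$2-Y$2\<bar> \<le> \<bar>X$2 - e\<bar> + \<bar>Y$2 - e\<bar>" by linarith
    ultimately show ?thesis using aA aB by argo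
  qed
qed

theorem mainTheorem6:
  fixes E F O2 P Q R :: "real^2" and \<beta> :: real
  assumes horiz: "F $ 2 = E $ 2" and len: "\<bar>F $ 1 - E $ 1\<bar> = 1"
    and beta: "pi / 6 \<le> \<beta>" "\<beta> < 5 * pi / 6"
    and P: "P = polar_pt O2 (sqrt 3 / 6) \<beta>"
    and Q: "Q = polar_pt O2 (sqrt 3 / 6) (\<beta> + 2 * pi / 3)"
    and R: "R = polar_pt O2 (sqrt 3 / 6) (\<beta> + 4 * pi / 3)"
  shows "mu [closed_segment E F, convex hull {P, Q, R}]
           \<ge> 1 / 4 * max (sin (\<beta> - pi / 6)) (sin (\<beta> + pi / 6))"
proof -
  define S where "S = convex hull (closed_segment E F \<union> convex hull {P, Q, R})"
  have muS: "mu [closed_segment E F, convex hull {P, Q, R}] = measure lebesgue S"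
    by (simp add: mu_def S_def)
  have cS: "convex S" unfolding S_def by simp
  have mS: "S \<in> lmeasurable" unfolding S_def
    by (intro lmeasurable_compact compact_convex_hull compact_Un compact_segment
        finite_imp_compact_convex_hull) auto
  have mem: "E \<in> S" "F \<in> S" "P \<in> S" "Q \<in> S" "R \<in> S" unfolding S_def
    by (auto intro!: hull_inc simp: hull_inc)
  have k1: "measure lebesgue S \<ge> \<bar>P$2-Q$2\<bar>/2" by (rule key[OF horiz len mem(1,2,3,4) cS mS])
  have k2: "measure lebesgue S \<ge> \<bar>P$2-R$2\<bar>/2" by (rule key[OF horiz len mem(1,2,3,5) cS mS])
  have e3: "2*pi/3 = pi - pi/3" by simp
  have e4: "4*pi/3 = pi/3 + pi" by simp
  have s3: "sin (2*pi/3) = sqrt 3 / 2" "cos (2*pi/3) = - 1/2"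
    by (simp_all only: e3 sin_pi_minus cos_pi_minus sin_60 cos_60)
  have s4: "sin (4*pi/3) = - sqrt 3 / 2" "cos (4*pi/3) = - 1/2"
    by (simp_all only: e4 sin_periodic_pi cos_periodic_pi sin_60 cos_60 minus_divide_left)
  have sq: "sqrt 3 * sqrt 3 = (3::real)" by simp
  have a1: "sin (\<beta> + 2*pi/3) = sin \<beta> * (-1/2) + cos \<beta> * (sqrt 3/2)"
    by (simp only: sin_add s3)
  have a2: "sin (\<beta> + 4*pi/3) = sin \<beta> * (-1/2) + cos \<beta> * (- sqrt 3/2)"
    by (simp only: sin_add s4)
  have b1: "sin (\<beta> - pi/6) = sin \<beta> * (sqrt 3/2) - cos \<beta> * (1/2)"
    by (simp only: sin_diff sin_30 cos_30)
  have b2: "sin (\<beta> + pi/6) = sin \<beta> * (sqrt 3/2) + cos \<beta> * (1/2)"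
    by (simp only: sin_add sin_30 cos_30)
  have d1: "P$2 - Q$2 = sin (\<beta> - pi/6) / 2"
    unfolding P Q polar_pt_def b1 a1
    by (simp add: algebra_simps)
  have d2: "P$2 - R$2 = sin (\<beta> + pi/6) / 2"
    unfolding P R polar_pt_def b2 a2
    by (simp add: algebra_simps)
  have "sin (\<beta> - pi / 6) \<le> 4 * measure lebesgue S" "sin (\<beta> + pi / 6) \<le> 4 * measure lebesgue S"
    using k1 k2 d1 d2 by (simp_all add: abs_le_iff)
  then show ?thesis using muS by (simp add: max_def)
qed

end
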